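(* If $\rho$ is an invariant state supported on $\Omega^\perp=\mathrm{span}\{|-\rangle,|+\rangle,\varphi_{0_1},\varphi_{0_N}\}$, then $\rho=P_-=|-\rangle\langle -|$.
   Context: Fix integers $N\ge 2$ and $n_1\ge n_2\ge\dots\ge n_N\ge 1$. Let $\mathcal H$ be a finite-dimensional complex Hilbert space with orthonormal basis $\{|-\rangle,|+\rangle\}\cup\{|a_k\rangle:1\le k\le N,\ 0\le a\le n_k-1\}$. For vectors $x,y$, $|x\rangle\langle y|$ denotes the operator $u\mapsto\langle y,u\rangle x$. Put $E_k=\mathrm{span}\{|a_k\rangle:0\le a\le n_k-1\}$, $P_k$ the orthogonal projection onto $E_k$, $P_\pm=|\pm\rangle\langle\pm|$, $\zeta_k=e^{2\pi i/n_k}$, and $\varphi_{a_k}=n_k^{-1/2}\sum_{b=0}^{n_k-1}\zeta_k^{-ba}|b_k\rangle$ for $0\le a\le n_k-1$. For $1\le k\le N-1$ let $Z_k=n_k^{-1/2}\sum_{b=0}^{n_{k+1}-1}\sum_{a=0}^{n_k-1}\zeta_k^{ba}|b_{k+1}\rangle\langle a_k|$ (an operator on $\mathcal H$), $|Z|_k=Z_k^*Z_k$. Let $\omega$ range over the set $\{\omega_+,\omega_-,\omega_1,\dots,\omega_{N-1}\}$ of (distinct) Bohr frequencies, and let $\Gamma_{\pm,\omega}>0$, $\gamma_{\pm,\omega}\in\mathbb R$ be constants. Kraus operators: $L_{-,\omega_+}=\sqrt{n_1\Gamma_{-,\omega_+}}|\varphi_{0_1}\rangle\langle +|$, $L_{+,\omega_+}=\sqrt{n_1\Gamma_{+,\omega_+}}|+\rangle\langle\varphi_{0_1}|$,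 $L_{-,\omega_k}=\sqrt{\Gamma_{-,\omega_k}}Z_k$, $L_{+,\omega_k}=\sqrt{\Gamma_{+,\omega_k}}Z_k^*$ ($1\le k\le N-1$), $L_{-,\omega_-}=\sqrt{\Gamma_{-,\omega_-}}|-\rangle\langle\varphi_{0_N}|$, $L_{+,\omega_-}=0$. Effective Hamiltonian $H_{\mathrm{eff}}=n_1\gamma_{-,\omega_+}P_+-n_1\gamma_{+,\omega_+}|\varphi_{0_1}\rangle\langle\varphi_{0_1}|+\gamma_{-,\omega_-}|\varphi_{0_N}\rangle\langle\varphi_{0_N}|-\gamma_{+,\omega_-}P_-+\sum_{k=1}^{N-1}(\gamma_{-,\omega_k}|Z|_k-\gamma_{+,\omega_k}P_{k+1})$. The generator is $\mathcal L(\rho)=-i[H_{\mathrm{eff}},\rho]+\sum_{\omega}\sum_{\epsilon=\pm}\big(L_{\epsilon,\omega}\rho L_{\epsilon,\omega}^*-\tfrac12\{L_{\epsilon,\omega}^*L_{\epsilon,\omega},\rho\}\big)$. A state is a positive operator of trace one; it is invariant if $\mathcal L(\rho)=0$; an operator is supported on a subspace $E$ if its range is contained in $E$. *)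

theory Defs
  imports Complex_Main
begin

text \<open>Orthonormal basis of the Hilbert space: Mn = |->, Pl = |+>, Bas k a = |a_k>.
  Vectors and operators are represented by their coordinates / matrix entries
  with respect to this basis; only indices in Idx N n are meaningful.\<close>

datatype idx = Mn | Pl | Bas nat nat
datatype sgn = Pos | Neg
datatype bohr = WP | WM | W nat  (* omega_+, omega_-, omega_k *)

type_synonym vec = "idx \<Rightarrow> complex"
type_synonym op = "idx \<Rightarrow> idx \<Rightarrow> complex"

definition Idx :: "nat \<Rightarrow> (nat \<Rightarrow> nat) \<Rightarrow> idx set" where
  "Idx N n = {Mn, Pl} \<union> {Bas k a | k a. 1 \<le> k \<and> k \<le> N \<and> a < n k}"

definition Freqs :: "nat \<Rightarrow> bohr set" where
  "Freqs N = {WP, WM} \<union> W ` {1..N-1}"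

definition ket :: "idx \<Rightarrow> vec" where
  "ket i = (\<lambda>j. if j = i then 1 else 0)"

text \<open>|x><y| u = <y,u> x, inner product conjugate-linear in the first slot.\<close>
definition outer :: "vec \<Rightarrow> vec \<Rightarrow> op" where
  "outer x y = (\<lambda>i j. x i * cnj (y j))"

definition opmult :: "idx set \<Rightarrow> op \<Rightarrow> op \<Rightarrow> op" where
  "opmult I A B = (\<lambda>i j. \<Sum>l\<in>I. A i l * B l j)"

definition adj :: "op \<Rightarrow> op" where
  "adj A = (\<lambda>i j. cnj (A j i))"

definition opapply :: "idx set \<Rightarrow> op \<Rightarrow> vec \<Rightarrow> vec" where
  "opapply I A u = (\<lambda>i. \<Sum>j\<in>I. A i j * u j)"

definition zeta :: "(nat \<Rightarrow> nat) \<Rightarrow> nat \<Rightarrow> complex" where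
  "zeta n k = cis (2 * pi / real (n k))"

definition phi :: "(nat \<Rightarrow> nat) \<Rightarrow> nat \<Rightarrow> nat \<Rightarrow> vec" where
  "phi n k a = (\<lambda>i. case i of
      Bas k' b \<Rightarrow> (if k' = k \<and> b < n k
                   then inverse (zeta n k ^ (b * a)) / complex_of_real (sqrt (real (n k)))
                   else 0)
    | _ \<Rightarrow> 0)"

definition Zop :: "(nat \<Rightarrow> nat) \<Rightarrow> nat \<Rightarrow> op" where
  "Zop n k = (\<lambda>i j. case (i, j) of
      (Bas k1 b, Bas k2 a) \<Rightarrow>
         (if k1 = Suc k \<and> k2 = k \<and> b < n (Suc k) \<and> a < n k
          then zeta n k ^ (b * a) / complex_of_real (sqrt (real (n k)))
          else 0)
    | _ \<Rightarrow> 0)"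

definition absZ :: "nat \<Rightarrow> (nat \<Rightarrow> nat) \<Rightarrow> nat \<Rightarrow> op" where
  "absZ N n k = opmult (Idx N n) (adj (Zop n k)) (Zop n k)"

definition Pk :: "(nat \<Rightarrow> nat) \<Rightarrow> nat \<Rightarrow> op" where
  "Pk n k = (\<lambda>i j. if i = j \<and> (\<exists>a. i = Bas k a \<and> a < n k) then 1 else 0)"

definition smult_op :: "complex \<Rightarrow> op \<Rightarrow> op" where
  "smult_op c A = (\<lambda>i j. c * A i j)"

definition sq :: "real \<Rightarrow> complex" where
  "sq x = complex_of_real (sqrt x)"

definition Kraus :: "nat \<Rightarrow> (nat \<Rightarrow> nat) \<Rightarrow> (sgn \<Rightarrow> bohr \<Rightarrow> real) \<Rightarrow> sgn \<Rightarrow> bohr \<Rightarrow> op" where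
  "Kraus N n Gam e w = (case (e, w) of
      (Neg, WP) \<Rightarrow> smult_op (sq (real (n 1) * Gam Neg WP)) (outer (phi n 1 0) (ket Pl))
    | (Pos, WP) \<Rightarrow> smult_op (sq (real (n 1) * Gam Pos WP)) (outer (ket Pl) (phi n 1 0))
    | (Neg, W k) \<Rightarrow> smult_op (sq (Gam Neg (W k))) (Zop n k)
    | (Pos, W k) \<Rightarrow> smult_op (sq (Gam Pos (W k))) (adj (Zop n k))
    | (Neg, WM) \<Rightarrow> smult_op (sq (Gam Neg WM)) (outer (ket Mn) (phi n N 0))
    | (Pos, WM) \<Rightarrow> (\<lambda>i j. 0))"

definition Heff :: "nat \<Rightarrow> (nat \<Rightarrow> nat) \<Rightarrow> (sgn \<Rightarrow> bohr \<Rightarrow> real) \<Rightarrow> op" where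
  "Heff N n gam = (\<lambda>i j.
       complex_of_real (real (n 1) * gam Neg WP) * outer (ket Pl) (ket Pl) i j
     - complex_of_real (real (n 1) * gam Pos WP) * outer (phi n 1 0) (phi n 1 0) i j
     + complex_of_real (gam Neg WM) * outer (phi n N 0) (phi n N 0) i j
     - complex_of_real (gam Pos WM) * outer (ket Mn) (ket Mn) i j
     + (\<Sum>k\<in>{1..N-1}. complex_of_real (gam Neg (W k)) * absZ N n k i j
                       - complex_of_real (gam Pos (W k)) * Pk n (Suc k) i j))"

definition Lgen :: "nat \<Rightarrow> (nat \<Rightarrow> nat) \<Rightarrow> (sgn \<Rightarrow> bohr \<Rightarrow> real) \<Rightarrow> (sgn \<Rightarrow> bohr \<Rightarrow> real) \<Rightarrow> op \<Rightarrow> op" where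
  "Lgen N n Gam gam \<rho> = (let I = Idx N n; H = Heff N n gam in
     (\<lambda>i j. - \<i> * (opmult I H \<rho> i j - opmult I \<rho> H i j)
       + (\<Sum>w\<in>Freqs N. \<Sum>e\<in>{Pos, Neg}.
            let L = Kraus N n Gam e w; LL = opmult I (adj L) L in
              opmult I (opmult I L \<rho>) (adj L) i j
              - (1/2) * (opmult I LL \<rho> i j + opmult I \<rho> LL i j))))"

definition is_state :: "nat \<Rightarrow> (nat \<Rightarrow> nat) \<Rightarrow> op \<Rightarrow> bool" where
  "is_state N n \<rho> \<longleftrightarrow>
     (\<forall>i j. i \<notin> Idx N n \<or> j \<notin> Idx N n \<longrightarrow> \<rho> i j = 0)
   \<and> (\<forall>v. let q = (\<Sum>i\<in>Idx N n. \<Sum>j\<in>Idx N n. cnj (v i) * \<rho> i j * v j)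
          in Im q = 0 \<and> Re q \<ge> 0)
   \<and> (\<Sum>i\<in>Idx N n. \<rho> i i) = 1"

definition invariant :: "nat \<Rightarrow> (nat \<Rightarrow> nat) \<Rightarrow> (sgn \<Rightarrow> bohr \<Rightarrow> real) \<Rightarrow> (sgn \<Rightarrow> bohr \<Rightarrow> real) \<Rightarrow> op \<Rightarrow> bool" where
  "invariant N n Gam gam \<rho> \<longleftrightarrow>
     (\<forall>i\<in>Idx N n. \<forall>j\<in>Idx N n. Lgen N n Gam gam \<rho> i j = 0)"

definition OmegaPerp :: "nat \<Rightarrow> (nat \<Rightarrow> nat) \<Rightarrow> vec set" where
  "OmegaPerp N n = {v. \<exists>a b c d. \<forall>i\<in>Idx N n.
      v i = a * ket Mn i + b * ket Pl i + c * phi n 1 0 i + d * phi n N 0 i}"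

definition supported_on :: "nat \<Rightarrow> (nat \<Rightarrow> nat) \<Rightarrow> op \<Rightarrow> vec set \<Rightarrow> bool" where
  "supported_on N n A E \<longleftrightarrow> (\<forall>u. opapply (Idx N n) A u \<in> E)"

end

theory Submission imports Defs begin

definition Bf :: "idx set \<Rightarrow> op \<Rightarrow> vec \<Rightarrow> vec \<Rightarrow> complex" where
  "Bf I r x y = (\<Sum>i\<in>I. \<Sum>j\<in>I. cnj (x i) * r i j * y j)"

lemma sum_delta_mult:
  fixes a :: complex
  assumes "finite I" "i \<in> I"
  shows "(\<Sum>x\<in>I. (if x = i then a else 0) * h x) = a * h i"
    "(\<Sum>x\<in>I. h x * (if x = i then a else 0)) = h i * a"
proof -
  have e1: "(\<lambda>x. (if x = i then a else 0) * h x) = (\<lambda>x. if x = i then a * h i else 0)" by (auto simp: fun_eq_iff)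
  show "(\<Sum>x\<in>I. (if x = i then a else 0) * h x) = a * h i" by (simp only: e1) (simp add: assms)
  have e2: "(\<lambda>x. h x * (if x = i then a else 0)) = (\<lambda>x. if x = i then h i * a else 0)" by (auto simp: fun_eq_iff)
  show "(\<Sum>x\<in>I. h x * (if x = i then a else 0)) = h i * a" by (simp only: e2) (simp add: assms)
qed

lemma sum_two_mult:
  fixes a b :: complex
  assumes "finite I" "i \<in> I" "j \<in> I"
  shows "(\<Sum>x\<in>I. h x * ((if x = i then a else 0) + (if x = j then b else 0))) = h i * a + h j * b"
    "(\<Sum>x\<in>I. ((if x = i then a else 0) + (if x = j then b else 0)) * h x) = a * h i + b * h j"
  by (simp add: distrib_left distrib_right sum.distrib sum_delta_mult assms)+

lemma Bf_two:
  assumes "finite I" "i \<in> I" "j \<in> I"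
  shows "Bf I r (\<lambda>x. (if x = i then a else 0) + (if x = j then b else 0)) (\<lambda>x. (if x = i then a else 0) + (if x = j then b else 0))
     = cnj a * r i i * a + cnj a * r i j * b + cnj b * r j i * a + cnj b * r j j * b"
proof -
  have c: "cnj ((if x = i then a else 0) + (if x = j then b else 0)) = (if x = i then cnj a else 0) + (if x = j then cnj b else 0)" for x
    by simp
  have "Bf I r (\<lambda>x. (if x = i then a else 0) + (if x = j then b else 0)) (\<lambda>x. (if x = i then a else 0) + (if x = j then b else 0))
    = (\<Sum>x\<in>I. ((if x = i then cnj a else 0) + (if x = j then cnj b else 0)) * (\<Sum>y\<in>I. r x y * ((if y = i then a else 0) + (if y = j then b else 0))))"
    unfolding Bf_def c by (simp add: sum_distrib_left mult.assoc)
  also have "\<dots> = (\<Sum>x\<in>I. ((if x = i then cnj a else 0) + (if x = j then cnj b else 0)) * (r x i * a + r x j * b))"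
    by (simp add: sum_two_mult assms)
  also have "\<dots> = cnj a * (r i i * a + r i j * b) + cnj b * (r j i * a + r j j * b)"
    by (rule sum_two_mult(2)[OF assms])
  finally show ?thesis by (simp add: algebra_simps)
qed

lemma Bf_one:
  assumes "finite I" "i \<in> I"
  shows "Bf I r (ket i) (ket i) = r i i"
proof -
  have "Bf I r (ket i) (ket i) = Bf I r (\<lambda>x. (if x = i then 1 else 0) + (if x = i then 0 else 0)) (\<lambda>x. (if x = i then 1 else 0) + (if x = i then 0 else 0))"
    by (simp add: ket_def)
  also have "\<dots> = r i i" using Bf_two[OF assms(1,2) assms(2), of r 1 0] by simp
  finally show ?thesis .
qed

lemma Bf_expand:
  "Bf I r (\<lambda>i. f i - c * g i) (\<lambda>i. f i - c * g i) = Bf I r f f - cnj c * Bf I r g f - c * Bf I r f g + cnj c * c * Bf I r g g"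
  by (simp add: Bf_def algebra_simps sum.distrib sum_subtractf sum_distrib_left)

lemma herm:
  assumes fin: "finite I" and pos: "\<forall>v. Im (Bf I r v v) = 0"
    and i: "i \<in> I" and j: "j \<in> I"
  shows "r j i = cnj (r i j)"
proof -
  have ii: "Im (r i i) = 0" using pos Bf_one[OF fin i, of r] by metis
  have jj: "Im (r j j) = 0" using pos Bf_one[OF fin j, of r] by metis
  have 1: "Im (r i i + r i j + r j i + r j j) = 0"
    using pos[rule_format, of "\<lambda>x. (if x = i then 1 else 0) + (if x = j then 1 else 0)"] Bf_two[OF fin i j, of r 1 1] by simp
  have 2: "Im (r i i + r i j * \<i> - \<i> * r j i + r j j) = 0"
    using pos[rule_format, of "\<lambda>x. (if x = i then 1 else 0) + (if x = j then \<i> else 0)"] Bf_two[OF fin i j, of r 1 \<i>] by (simp add: algebra_simps)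
  show ?thesis using ii jj 1 2 by (simp add: complex_eq_iff)
qed

lemma kernel:
  assumes fin: "finite I" and pos: "\<forall>v. Im (Bf I r v v) = 0 \<and> 0 \<le> Re (Bf I r v v)"
    and her: "\<forall>i\<in>I. \<forall>j\<in>I. r j i = cnj (r i j)"
    and f0: "Bf I r f f = 0"
  shows "\<forall>i\<in>I. (\<Sum>j\<in>I. r i j * f j) = 0"
proof -
  define g where "g i = (\<Sum>j\<in>I. r i j * f j)" for i
  define Gr where "Gr = (\<Sum>i\<in>I. (cmod (g i))^2)"
  have G: "(\<Sum>i\<in>I. cnj (g i) * g i) = complex_of_real Gr"
    unfolding Gr_def of_real_sum
    by (intro sum.cong refl) (rule trans[OF mult.commute complex_norm_square[symmetric]])
  have gf: "Bf I r g f = complex_of_real Gr"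
    unfolding Bf_def G[symmetric] g_def by (simp add: sum_distrib_left mult.assoc)
  have cg: "(\<Sum>i\<in>I. cnj (f i) * r i j) = cnj (g j)" if "j \<in> I" for j
  proof -
    have "cnj (g j) = (\<Sum>i\<in>I. cnj (r j i) * cnj (f i))" by (simp add: g_def)
    also have "\<dots> = (\<Sum>i\<in>I. cnj (f i) * r i j)"
    proof (rule sum.cong[OF refl])
      fix i assume "i \<in> I"
      then have "r i j = cnj (r j i)" using her that by blast
      then show "cnj (r j i) * cnj (f i) = cnj (f i) * r i j" by simp
    qed
    finally show ?thesis by simp
  qed
  have fg: "Bf I r f g = complex_of_real Gr"
  proof -
    have "Bf I r f g = (\<Sum>j\<in>I. (\<Sum>i\<in>I. cnj (f i) * r i j) * g j)"
      unfolding Bf_def by (subst sum.swap) (simp add: sum_distrib_right)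
    also have "\<dots> = (\<Sum>j\<in>I. cnj (g j) * g j)" by (simp add: cg)
    finally show ?thesis using G by simp
  qed
  define Q where "Q = Re (Bf I r g g)"
  have Qc: "Bf I r g g = complex_of_real Q" using pos unfolding Q_def by (simp add: complex_eq_iff)
  have Q0: "0 \<le> Q" using pos unfolding Q_def by simp
  have ineq: "0 \<le> - 2 * s * Gr + s * s * Q" if "s > 0" for s
  proof -
    have "Bf I r (\<lambda>i. f i - complex_of_real s * g i) (\<lambda>i. f i - complex_of_real s * g i)
       = complex_of_real (- 2 * s * Gr + s * s * Q)"
      by (simp add: Bf_expand f0 gf fg Qc)
    moreover have "0 \<le> Re (Bf I r (\<lambda>i. f i - complex_of_real s * g i) (\<lambda>i. f i - complex_of_real s * g i))"
      using pos by blast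
    ultimately show ?thesis by simp
  qed
  have Gr0: "0 \<le> Gr" unfolding Gr_def by (simp add: sum_nonneg)
  have "Gr = 0"
  proof (rule ccontr)
    assume "Gr \<noteq> 0"
    then have gp: "Gr > 0" using Gr0 by simp
    define s where "s = Gr / (Q + 1)"
    have sp: "s > 0" unfolding s_def using gp Q0 by simp
    have "0 \<le> - 2 * s * Gr + s * s * Q" using ineq sp by simp
    then have "s * (2 * Gr) \<le> s * (s * Q)" by (simp add: algebra_simps)
    then have "2 * Gr \<le> s * Q" using sp by (simp only: mult_le_cancel_left_pos)
    moreover have "s * Q < Gr" unfolding s_def using gp Q0 by (simp add: field_simps)
    ultimately show False using gp by simp
  qed
  then have "\<forall>i\<in>I. (cmod (g i))^2 = 0" using fin unfolding Gr_def by (simp add: sum_nonneg_eq_0_iff)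
  then show ?thesis unfolding g_def by simp
qed


lemma finite_Idx: "finite (Idx N n)"
proof -
  have "Idx N n = {Mn, Pl} \<union> (\<lambda>(k,a). Bas k a) ` (SIGMA k:{1..N}. {..<n k})"
    unfolding Idx_def by auto
  then show ?thesis by simp
qed

lemma phi0_Bas: "phi n k 0 (Bas k' b) = (if k' = k \<and> b < n k then 1 / complex_of_real (sqrt (real (n k))) else 0)"
  by (simp add: phi_def)
lemma phi0_MnPl[simp]: "phi n k a Mn = 0" "phi n k a Pl = 0"
  by (simp_all add: phi_def)
lemma cnj_phi0[simp]: "cnj (phi n k 0 i) = phi n k 0 i"
  by (cases i) (simp_all add: phi_def)
lemma Zop_MnPl[simp]: "Zop n k Mn j = 0" "Zop n k Pl j = 0" "Zop n k i Mn = 0" "Zop n k i Pl = 0"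
  by (cases i; simp add: Zop_def)+
lemma Zop_Bas: "Zop n k (Bas k1 b) (Bas k2 a) = (if k1 = Suc k \<and> k2 = k \<and> b < n (Suc k) \<and> a < n k
          then zeta n k ^ (b * a) / complex_of_real (sqrt (real (n k))) else 0)"
  by (simp add: Zop_def)
lemma ket_simps[simp]: "ket Mn Mn = 1" "ket Pl Pl = 1" "ket Mn Pl = 0" "ket Pl Mn = 0"
  "ket Mn (Bas k a) = 0" "ket Pl (Bas k a) = 0"
  by (simp_all add: ket_def)

lemma Zop_20: "0 < n 2 \<Longrightarrow> Zop n 1 (Bas 2 0) m = phi n 1 0 m"
  by (cases m) (simp_all add: Zop_def phi_def numeral_2_eq_2)

lemma Idx_simps[simp]: "Mn \<in> Idx N n" "Pl \<in> Idx N n" "Bas k a \<in> Idx N n \<longleftrightarrow> 1 \<le> k \<and> k \<le> N \<and> a < n k"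
  by (auto simp: Idx_def)

lemma K_NegWP: "Kraus N n Gam Neg WP i j = sq (real (n 1) * Gam Neg WP) * (phi n 1 0 i * cnj (ket Pl j))"
  by (simp add: Kraus_def smult_op_def outer_def)
lemma K_PosWP: "Kraus N n Gam Pos WP i j = sq (real (n 1) * Gam Pos WP) * (ket Pl i * cnj (phi n 1 0 j))"
  by (simp add: Kraus_def smult_op_def outer_def)
lemma K_NegW: "Kraus N n Gam Neg (W k) i j = sq (Gam Neg (W k)) * Zop n k i j"
  by (simp add: Kraus_def smult_op_def)
lemma K_PosW: "Kraus N n Gam Pos (W k) i j = sq (Gam Pos (W k)) * cnj (Zop n k j i)"
  by (simp add: Kraus_def smult_op_def adj_def)
lemma K_NegWM: "Kraus N n Gam Neg WM i j = sq (Gam Neg WM) * (ket Mn i * cnj (phi n N 0 j))"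
  by (simp add: Kraus_def smult_op_def outer_def)
lemma K_PosWM: "Kraus N n Gam Pos WM i j = 0"
  by (simp add: Kraus_def)

lemma K_colMn: "Kraus N n Gam e w m Mn = 0"
  by (cases e; cases w) (simp_all add: K_NegWP K_PosWP K_NegW K_PosW K_NegWM K_PosWM)
lemma K_colPl: "(e, w) \<noteq> (Neg, WP) \<Longrightarrow> Kraus N n Gam e w m Pl = 0"
  by (cases e; cases w) (simp_all add: K_NegWP K_PosWP K_NegW K_PosW K_NegWM K_PosWM)
lemma K_rowMn: "(e, w) \<noteq> (Neg, WM) \<Longrightarrow> Kraus N n Gam e w Mn m = 0"
  by (cases e; cases w) (simp_all add: K_NegWP K_PosWP K_NegW K_PosW K_NegWM K_PosWM)

lemma Heff_Mn: "Heff N n gam Mn l = - complex_of_real (gam Pos WM) * ket Mn l"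
   "Heff N n gam l Mn = - complex_of_real (gam Pos WM) * ket Mn l"
  by (cases l; simp add: Heff_def outer_def absZ_def opmult_def adj_def Pk_def ket_def)+

lemma Lgen_diag:
  "Lgen N n Gam gam r x x =
    - \<i> * ((\<Sum>l\<in>Idx N n. Heff N n gam x l * r l x) - (\<Sum>l\<in>Idx N n. r x l * Heff N n gam l x))
    + (\<Sum>w\<in>Freqs N. \<Sum>e\<in>{Pos, Neg}.
        (\<Sum>l\<in>Idx N n. (\<Sum>m\<in>Idx N n. Kraus N n Gam e w x m * r m l) * cnj (Kraus N n Gam e w x l))
        - 1/2 * ((\<Sum>l\<in>Idx N n. (\<Sum>m\<in>Idx N n. cnj (Kraus N n Gam e w m x) * Kraus N n Gam e w m l) * r l x)
               + (\<Sum>l\<in>Idx N n. r x l * (\<Sum>m\<in>Idx N n. cnj (Kraus N n Gam e w m l) * Kraus N n Gam e w m x))))"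
  by (simp add: Lgen_def Let_def opmult_def adj_def)

lemma sum_single2:
  assumes "finite A" "w0 \<in> A" "\<And>e w. w \<in> A \<Longrightarrow> (e, w) \<noteq> (e0, w0) \<Longrightarrow> T e w = 0"
  shows "(\<Sum>w\<in>A. \<Sum>e\<in>{Pos, Neg}. T e w) = T e0 w0"
proof -
  have 1: "\<forall>w\<in>A. (\<Sum>e\<in>{Pos, Neg}. T e w) = (if w = w0 then T e0 w0 else 0)"
    using assms(3) by (cases e0) auto
  have "(\<Sum>w\<in>A. \<Sum>e\<in>{Pos, Neg}. T e w) = (\<Sum>w\<in>A. if w = w0 then T e0 w0 else 0)"
    by (rule sum.cong[OF refl]) (use 1 in blast)
  also have "\<dots> = T e0 w0" using assms(1,2) by simp
  finally show ?thesis .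
qed

lemma finite_Freqs: "finite (Freqs N)" by (simp add: Freqs_def)

lemma sq_cnj: "0 \<le> x \<Longrightarrow> sq x * cnj (sq x) = complex_of_real x"
  by (simp add: sq_def flip: of_real_mult)

lemma sum_block:
  assumes "1 \<le> k" "k \<le> N" "\<And>i. (\<forall>a. i \<noteq> Bas k a) \<Longrightarrow> f i = 0"
  shows "(\<Sum>i\<in>Idx N n. f i) = (\<Sum>a<n k. f (Bas k a))"
proof -
  have "(\<Sum>i\<in>Idx N n. f i) = (\<Sum>i\<in>Bas k ` {..<n k}. f i)"
  proof (rule sum.mono_neutral_right[OF finite_Idx])
    show "Bas k ` {..<n k} \<subseteq> Idx N n" using assms by auto
    show "\<forall>i\<in>Idx N n - Bas k ` {..<n k}. f i = 0"
    proof
      fix i assume i: "i \<in> Idx N n - Bas k ` {..<n k}"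
      show "f i = 0"
      proof (cases "\<exists>a. i = Bas k a")
        case True then obtain a where "i = Bas k a" by blast
        then show ?thesis using i by auto
      next
        case False then show ?thesis using assms(3) by blast
      qed
    qed
  qed
  also have "\<dots> = (\<Sum>a<n k. f (Bas k a))" by (simp add: sum.reindex inj_on_def)
  finally show ?thesis .
qed

lemma sum_MnPl:
  assumes "\<And>i. i \<noteq> Mn \<Longrightarrow> i \<noteq> Pl \<Longrightarrow> f i = 0"
  shows "(\<Sum>i\<in>Idx N n. f i) = f Mn + f Pl"
proof -
  have "(\<Sum>i\<in>Idx N n. f i) = (\<Sum>i\<in>{Mn, Pl}. f i)"
    by (rule sum.mono_neutral_right[OF finite_Idx]) (use assms in auto)
  then show ?thesis by simp
qed


definition Tdiag where
  "Tdiag N n Gam r x e w =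
        (\<Sum>l\<in>Idx N n. (\<Sum>m\<in>Idx N n. Kraus N n Gam e w x m * r m l) * cnj (Kraus N n Gam e w x l))
        - 1/2 * ((\<Sum>l\<in>Idx N n. (\<Sum>m\<in>Idx N n. cnj (Kraus N n Gam e w m x) * Kraus N n Gam e w m l) * r l x)
               + (\<Sum>l\<in>Idx N n. r x l * (\<Sum>m\<in>Idx N n. cnj (Kraus N n Gam e w m l) * Kraus N n Gam e w m x)))"

lemma Lgen_diag':
  "Lgen N n Gam gam r x x =
    - \<i> * ((\<Sum>l\<in>Idx N n. Heff N n gam x l * r l x) - (\<Sum>l\<in>Idx N n. r x l * Heff N n gam l x))
    + (\<Sum>w\<in>Freqs N. \<Sum>e\<in>{Pos, Neg}. Tdiag N n Gam r x e w)"
  unfolding Lgen_diag Tdiag_def ..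

lemma Heff_Mn': "Heff N n gam Mn l = (if l = Mn then - complex_of_real (gam Pos WM) else 0)"
   "Heff N n gam l Mn = (if l = Mn then - complex_of_real (gam Pos WM) else 0)"
  by (simp_all add: Heff_Mn ket_def)

lemma phi0_out: "(\<forall>a. i \<noteq> Bas k a) \<Longrightarrow> phi n k 0 i = 0"
  by (cases i) (auto simp: phi_def)

locale S =
  fixes N :: nat and n :: "nat \<Rightarrow> nat" and Gam gam :: "sgn \<Rightarrow> bohr \<Rightarrow> real" and r :: op
  assumes N2: "N \<ge> 2"
    and npos: "\<forall>k. 1 \<le> k \<and> k \<le> N \<longrightarrow> 1 \<le> n k"
    and Gpos: "\<forall>e. \<forall>w\<in>Freqs N. Gam e w > 0"
    and st: "is_state N n r"
    and inv: "invariant N n Gam gam r"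
    and sup: "supported_on N n r (OmegaPerp N n)"
begin

lemma out: "i \<notin> Idx N n \<or> j \<notin> Idx N n \<Longrightarrow> r i j = 0"
  using st unfolding is_state_def by blast

lemma pos: "\<forall>v. Im (Bf (Idx N n) r v v) = 0 \<and> 0 \<le> Re (Bf (Idx N n) r v v)"
  using st unfolding is_state_def Bf_def Let_def by blast

lemma her: "r j i = cnj (r i j)"
proof (cases "i \<in> Idx N n \<and> j \<in> Idx N n")
  case True then show ?thesis using herm[OF finite_Idx] pos by blast
next
  case False then show ?thesis using out by auto
qed

lemma her_all: "\<forall>i\<in>Idx N n. \<forall>j\<in>Idx N n. r j i = cnj (r i j)"
  using her by blast

lemma col: "\<exists>a b c d. \<forall>i\<in>Idx N n. r i j = a * ket Mn i + b * ket Pl i + c * phi n 1 0 i + d * phi n N 0 i"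
proof (cases "j \<in> Idx N n")
  case True
  have "opapply (Idx N n) r (ket j) = (\<lambda>i. r i j)"
    unfolding opapply_def ket_def by (rule ext) (simp add: sum_delta_mult(2)[OF finite_Idx True])
  then have "(\<lambda>i. r i j) \<in> OmegaPerp N n" using sup unfolding supported_on_def by metis
  then show ?thesis by (simp add: OmegaPerp_def)
next
  case False then show ?thesis using out by (intro exI[of _ 0]) auto
qed

lemma C1: "2 \<le> k \<Longrightarrow> k < N \<Longrightarrow> r (Bas k b) j = 0"
proof (cases "Bas k b \<in> Idx N n")
  case True
  assume k: "2 \<le> k" "k < N"
  obtain a b' c d where e: "\<forall>i\<in>Idx N n. r i j = a * ket Mn i + b' * ket Pl i + c * phi n 1 0 i + d * phi n N 0 i"
    using col by blast
  have "r (Bas k b) j = a * ket Mn (Bas k b) + b' * ket Pl (Bas k b) + c * phi n 1 0 (Bas k b) + d * phi n N 0 (Bas k b)"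
    using e True by blast
  then show ?thesis using k by (simp add: phi0_Bas)
next
  case False then show ?thesis using out by auto
qed

lemma Cblock: assumes "k = 1 \<or> k = N" "b < n k" shows "r (Bas k b) j = r (Bas k 0) j"
proof -
  have k: "1 \<le> k" "k \<le> N" "1 \<noteq> N" using assms(1) N2 by auto
  have in1: "Bas k b \<in> Idx N n" "Bas k 0 \<in> Idx N n" using k assms(2) by auto
  obtain a b' c d where e: "\<forall>i\<in>Idx N n. r i j = a * ket Mn i + b' * ket Pl i + c * phi n 1 0 i + d * phi n N 0 i"
    using col by blast
  have pk: "0 < n k" using npos k by auto
  have e1: "r (Bas k b) j = a * ket Mn (Bas k b) + b' * ket Pl (Bas k b) + c * phi n 1 0 (Bas k b) + d * phi n N 0 (Bas k b)"
    using e in1 by blast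
  have e2: "r (Bas k 0) j = a * ket Mn (Bas k 0) + b' * ket Pl (Bas k 0) + c * phi n 1 0 (Bas k 0) + d * phi n N 0 (Bas k 0)"
    using e in1 by blast
  show ?thesis unfolding e1 e2 using assms k pk by (auto simp: phi0_Bas)
qed

lemma block_kill:
  assumes k: "k = 1 \<or> k = N" and B0: "Bf (Idx N n) r (phi n k 0) (phi n k 0) = 0"
  shows "r (Bas k b) j = 0"
proof -
  have k1: "1 \<le> k" "k \<le> N" using k N2 by auto
  have pk: "1 \<le> n k" using npos k1 by auto
  have ker: "\<forall>i\<in>Idx N n. (\<Sum>j\<in>Idx N n. r i j * phi n k 0 j) = 0"
    using kernel[OF finite_Idx pos her_all B0] .
  have "r (Bas k 0) j = 0"
  proof (cases "j \<in> Idx N n")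
    case False then show ?thesis using out by auto
  next
    case True
    have "(\<Sum>l\<in>Idx N n. r j l * phi n k 0 l) = (\<Sum>a<n k. r j (Bas k a) * phi n k 0 (Bas k a))"
      by (rule sum_block[OF k1]) (simp add: phi0_out)
    also have "\<dots> = (\<Sum>a<n k. cnj (r (Bas k 0) j) * (1 / complex_of_real (sqrt (real (n k)))))"
    proof (rule sum.cong[OF refl])
      fix a assume "a \<in> {..<n k}"
      then have "r (Bas k a) j = r (Bas k 0) j" using Cblock[OF k, of a j] by blast
      then have "r j (Bas k a) = cnj (r (Bas k 0) j)" using her by metis
      then show "r j (Bas k a) * phi n k 0 (Bas k a) = cnj (r (Bas k 0) j) * (1 / complex_of_real (sqrt (real (n k))))"
        using \<open>a \<in> {..<n k}\<close> by (simp add: phi0_Bas)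
    qed
    also have "\<dots> = of_nat (n k) * cnj (r (Bas k 0) j) / complex_of_real (sqrt (real (n k)))" by simp
    finally have "of_nat (n k) * cnj (r (Bas k 0) j) / complex_of_real (sqrt (real (n k))) = 0"
      using ker True by simp
    then show ?thesis using pk by simp
  qed
  then show ?thesis
  proof (cases "b < n k")
    case True then show ?thesis using Cblock[OF k True, of j] \<open>r (Bas k 0) j = 0\<close> by simp
  next
    case False then show ?thesis using out by simp
  qed
qed

end

lemma K_PlPl: "Kraus N n Gam e w Pl Pl = 0"
  by (cases e; cases w) (simp_all add: K_NegWP K_PosWP K_NegW K_PosW K_NegWM K_PosWM)

lemma phi_sq_sum: assumes "1 \<le> N" "0 < n 1"
  shows "(\<Sum>m\<in>Idx N n. phi n 1 0 m * phi n 1 0 m) = 1"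
proof -
  have "(\<Sum>m\<in>Idx N n. phi n 1 0 m * phi n 1 0 m) = (\<Sum>a<n 1. phi n 1 0 (Bas 1 a) * phi n 1 0 (Bas 1 a))"
    by (rule sum_block) (use assms in \<open>auto simp: phi0_out\<close>)
  also have "\<dots> = (\<Sum>a<n 1. 1 / complex_of_real (real (n 1)))"
    by (rule sum.cong[OF refl]) (simp add: phi0_Bas flip: of_real_mult)
  also have "\<dots> = 1" using assms by simp
  finally show ?thesis .
qed

context S begin

lemma Bf_swap: "Bf (Idx N n) r (phi n k 0) (phi n k 0) = (\<Sum>l\<in>Idx N n. \<Sum>m\<in>Idx N n. phi n k 0 m * r m l * phi n k 0 l)"
  unfolding Bf_def cnj_phi0 by (rule sum.swap)

lemma WM_in: "WM \<in> Freqs N" and WP_in: "WP \<in> Freqs N" and W1_in: "W 1 \<in> Freqs N"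
  using N2 by (auto simp: Freqs_def)

lemma LMn: "Lgen N n Gam gam r Mn Mn = complex_of_real (Gam Neg WM) * Bf (Idx N n) r (phi n N 0) (phi n N 0)"
proof -
  have H: "(\<Sum>l\<in>Idx N n. Heff N n gam Mn l * r l Mn) - (\<Sum>l\<in>Idx N n. r Mn l * Heff N n gam l Mn) = 0"
    by (simp add: Heff_Mn' sum_delta_mult[OF finite_Idx])
  have T0: "Tdiag N n Gam r Mn e w = 0" if "w \<in> Freqs N" "(e,w) \<noteq> (Neg,WM)" for e w
    using that by (simp add: Tdiag_def K_rowMn K_colMn)
  have "Tdiag N n Gam r Mn Neg WM = (\<Sum>l\<in>Idx N n. (\<Sum>m\<in>Idx N n. sq (Gam Neg WM) * phi n N 0 m * r m l) * (cnj (sq (Gam Neg WM)) * phi n N 0 l))"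
    by (simp add: Tdiag_def K_colMn K_NegWM mult.assoc)
  also have "\<dots> = sq (Gam Neg WM) * cnj (sq (Gam Neg WM)) * (\<Sum>l\<in>Idx N n. \<Sum>m\<in>Idx N n. phi n N 0 m * r m l * phi n N 0 l)"
    by (simp add: sum_distrib_left sum_distrib_right mult_ac)
  also have "\<dots> = complex_of_real (Gam Neg WM) * Bf (Idx N n) r (phi n N 0) (phi n N 0)"
    using Gpos WM_in by (simp add: sq_cnj Bf_swap less_imp_le)
  finally have T1: "Tdiag N n Gam r Mn Neg WM = complex_of_real (Gam Neg WM) * Bf (Idx N n) r (phi n N 0) (phi n N 0)" .
  have "(\<Sum>w\<in>Freqs N. \<Sum>e\<in>{Pos, Neg}. Tdiag N n Gam r Mn e w) = Tdiag N n Gam r Mn Neg WM"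
    by (rule sum_single2[OF finite_Freqs WM_in]) (use T0 in auto)
  then show ?thesis unfolding Lgen_diag' H using T1 by simp
qed

lemma BfN: "Bf (Idx N n) r (phi n N 0) (phi n N 0) = 0"
proof -
  have "Lgen N n Gam gam r Mn Mn = 0" using inv unfolding invariant_def by simp
  moreover have "Gam Neg WM > 0" using Gpos WM_in by blast
  ultimately show ?thesis using LMn by simp
qed

lemma RowZero: "k \<noteq> 1 \<Longrightarrow> r (Bas k b) j = 0"
proof -
  assume k: "k \<noteq> 1"
  consider "k = 0" | "2 \<le> k \<and> k < N" | "k = N" | "k > N" using k by linarith
  then show ?thesis
  proof cases
    case 1 then show ?thesis using out by simp
  next
    case 2 then show ?thesis using C1 by blast
  next
    case 3 then show ?thesis using block_kill[of N, OF _ BfN] by simp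
  next
    case 4 then show ?thesis using out by simp
  qed
qed

lemma ColZero: "k \<noteq> 1 \<Longrightarrow> r j (Bas k b) = 0"
  using RowZero her by (metis complex_cnj_zero)

end

context S begin

lemma n2: "0 < n 2" using npos[rule_format, of 2] N2 by simp
lemma n1: "0 < n 1" using npos[rule_format, of 1] N2 by simp

lemma Zop20': "Zop n (Suc 0) (Bas 2 0) m = phi n (Suc 0) 0 m"
  using Zop_20[of n, OF n2] by simp

lemma Kx: "(e, w) \<noteq> (Neg, W 1) \<Longrightarrow> Kraus N n Gam e w (Bas 2 0) m * r m l = 0"
proof (cases m)
  case Mn then show ?thesis by (simp add: K_colMn)
next
  case Pl
  assume ew: "(e, w) \<noteq> (Neg, W 1)"
  show ?thesis
  proof (cases "(e, w) = (Neg, WP)")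
    case True then show ?thesis using Pl by (simp add: K_NegWP phi0_Bas)
  next
    case False then show ?thesis using Pl by (simp add: K_colPl)
  qed
next
  case (Bas k a)
  assume ew: "(e, w) \<noteq> (Neg, W 1)"
  show ?thesis
  proof (cases "k = 1")
    case False then show ?thesis using Bas RowZero by simp
  next
    case True
    then show ?thesis using Bas ew
      by (cases e; cases w) (auto simp: K_NegWP K_PosWP K_NegW K_PosW K_NegWM K_PosWM Zop_Bas phi0_Bas)
  qed
qed

lemma LB2: "Lgen N n Gam gam r (Bas 2 0) (Bas 2 0) = complex_of_real (Gam Neg (W 1)) * Bf (Idx N n) r (phi n 1 0) (phi n 1 0)"
proof -
  have H: "(\<Sum>l\<in>Idx N n. Heff N n gam (Bas 2 0) l * r l (Bas 2 0)) - (\<Sum>l\<in>Idx N n. r (Bas 2 0) l * Heff N n gam l (Bas 2 0)) = 0"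
    by (simp add: RowZero ColZero)
  have T0: "Tdiag N n Gam r (Bas 2 0) e w = 0" if "w \<in> Freqs N" "(e,w) \<noteq> (Neg,W 1)" for e w
    using that by (simp add: Tdiag_def Kx RowZero ColZero)
  have "Tdiag N n Gam r (Bas 2 0) Neg (W 1) = (\<Sum>l\<in>Idx N n. (\<Sum>m\<in>Idx N n. sq (Gam Neg (W 1)) * phi n 1 0 m * r m l) * (cnj (sq (Gam Neg (W 1))) * phi n 1 0 l))"
    by (simp add: Tdiag_def K_NegW Zop20' RowZero ColZero mult.assoc)
  also have "\<dots> = sq (Gam Neg (W 1)) * cnj (sq (Gam Neg (W 1))) * (\<Sum>l\<in>Idx N n. \<Sum>m\<in>Idx N n. phi n 1 0 m * r m l * phi n 1 0 l)"
    by (simp add: sum_distrib_left sum_distrib_right mult_ac)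
  also have "\<dots> = complex_of_real (Gam Neg (W 1)) * Bf (Idx N n) r (phi n 1 0) (phi n 1 0)"
    using Gpos W1_in by (simp add: sq_cnj Bf_swap less_imp_le)
  finally have T1: "Tdiag N n Gam r (Bas 2 0) Neg (W 1) = complex_of_real (Gam Neg (W 1)) * Bf (Idx N n) r (phi n 1 0) (phi n 1 0)" .
  have "(\<Sum>w\<in>Freqs N. \<Sum>e\<in>{Pos, Neg}. Tdiag N n Gam r (Bas 2 0) e w) = Tdiag N n Gam r (Bas 2 0) Neg (W 1)"
    by (rule sum_single2[OF finite_Freqs W1_in]) (use T0 in auto)
  then show ?thesis unfolding Lgen_diag' H using T1 by simp
qed

lemma Bf1: "Bf (Idx N n) r (phi n 1 0) (phi n 1 0) = 0"
proof -
  have "Bas 2 0 \<in> Idx N n" using N2 n2 by simp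
  then have "Lgen N n Gam gam r (Bas 2 0) (Bas 2 0) = 0" using inv unfolding invariant_def by blast
  moreover have "Gam Neg (W 1) > 0" using Gpos W1_in by blast
  ultimately show ?thesis using LB2 by simp
qed

lemma Z2: "i \<noteq> Mn \<Longrightarrow> i \<noteq> Pl \<Longrightarrow> r i j = 0"
proof (cases i)
  case (Bas k b)
  then show ?thesis
  proof (cases "k = 1")
    case True then show ?thesis using Bas block_kill[of 1, OF _ Bf1] by simp
  next
    case False then show ?thesis using Bas RowZero by simp
  qed
qed auto

lemma Z2': "i \<noteq> Mn \<Longrightarrow> i \<noteq> Pl \<Longrightarrow> r j i = 0"
  using Z2 her by (metis complex_cnj_zero)

lemma LPl: "Lgen N n Gam gam r Pl Pl = - complex_of_real (real (n 1) * Gam Neg WP) * r Pl Pl"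
proof -
  have s1: "(\<Sum>l\<in>Idx N n. Heff N n gam Pl l * r l Pl) = Heff N n gam Pl Mn * r Mn Pl + Heff N n gam Pl Pl * r Pl Pl"
    by (rule sum_MnPl) (simp add: Z2)
  have s2: "(\<Sum>l\<in>Idx N n. r Pl l * Heff N n gam l Pl) = r Pl Mn * Heff N n gam Mn Pl + r Pl Pl * Heff N n gam Pl Pl"
    by (rule sum_MnPl) (simp add: Z2')
  have H: "(\<Sum>l\<in>Idx N n. Heff N n gam Pl l * r l Pl) - (\<Sum>l\<in>Idx N n. r Pl l * Heff N n gam l Pl) = 0"
    unfolding s1 s2 by (simp add: Heff_Mn')
  have Tg: "Tdiag N n Gam r Pl e w = - (\<Sum>m\<in>Idx N n. cnj (Kraus N n Gam e w m Pl) * Kraus N n Gam e w m Pl) * r Pl Pl" for e w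
  proof -
    have a: "(\<Sum>m\<in>Idx N n. Kraus N n Gam e w Pl m * r m l) = 0" for l
    proof -
      have "(\<Sum>m\<in>Idx N n. Kraus N n Gam e w Pl m * r m l) = Kraus N n Gam e w Pl Mn * r Mn l + Kraus N n Gam e w Pl Pl * r Pl l"
        by (rule sum_MnPl) (simp add: Z2)
      then show ?thesis by (simp add: K_colMn K_PlPl)
    qed
    have b: "(\<Sum>l\<in>Idx N n. (\<Sum>m\<in>Idx N n. cnj (Kraus N n Gam e w m Pl) * Kraus N n Gam e w m l) * r l Pl)
        = (\<Sum>m\<in>Idx N n. cnj (Kraus N n Gam e w m Pl) * Kraus N n Gam e w m Pl) * r Pl Pl"
      by (subst sum_MnPl) (simp_all add: Z2 K_colMn)
    have c: "(\<Sum>l\<in>Idx N n. r Pl l * (\<Sum>m\<in>Idx N n. cnj (Kraus N n Gam e w m l) * Kraus N n Gam e w m Pl))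
        = r Pl Pl * (\<Sum>m\<in>Idx N n. cnj (Kraus N n Gam e w m Pl) * Kraus N n Gam e w m Pl)"
      by (subst sum_MnPl) (simp_all add: Z2' K_colMn)
    show ?thesis unfolding Tdiag_def a b c by simp
  qed
  have T0: "Tdiag N n Gam r Pl e w = 0" if "w \<in> Freqs N" "(e,w) \<noteq> (Neg,WP)" for e w
    unfolding Tg using that by (simp add: K_colPl)
  have T1: "Tdiag N n Gam r Pl Neg WP = - complex_of_real (real (n 1) * Gam Neg WP) * r Pl Pl"
  proof -
    have "(\<Sum>m\<in>Idx N n. cnj (Kraus N n Gam Neg WP m Pl) * Kraus N n Gam Neg WP m Pl)
       = cnj (sq (real (n 1) * Gam Neg WP)) * sq (real (n 1) * Gam Neg WP) * (\<Sum>m\<in>Idx N n. phi n 1 0 m * phi n 1 0 m)"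
      by (simp add: K_NegWP sum_distrib_left mult_ac)
    also have "\<dots> = complex_of_real (real (n 1) * Gam Neg WP)"
      using Gpos WP_in phi_sq_sum[of N n] N2 n1 by (simp add: mult.commute[of "cnj _"] sq_cnj less_imp_le)
    finally show ?thesis unfolding Tg by simp
  qed
  have "(\<Sum>w\<in>Freqs N. \<Sum>e\<in>{Pos, Neg}. Tdiag N n Gam r Pl e w) = Tdiag N n Gam r Pl Neg WP"
    by (rule sum_single2[OF finite_Freqs WP_in]) (use T0 in auto)
  then show ?thesis unfolding Lgen_diag' H using T1 by simp
qed

lemma PlPl: "r Pl Pl = 0"
proof -
  have "Lgen N n Gam gam r Pl Pl = 0" using inv unfolding invariant_def by simp
  moreover have "Gam Neg WP > 0" using Gpos WP_in by blast
  ultimately show ?thesis using LPl n1 by simp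
qed

lemma MnPl: "r Mn Pl = 0"
proof -
  have "Bf (Idx N n) r (ket Pl) (ket Pl) = 0" using PlPl Bf_one[OF finite_Idx, of Pl] by simp
  then have "\<forall>i\<in>Idx N n. (\<Sum>j\<in>Idx N n. r i j * ket Pl j) = 0"
    using kernel[OF finite_Idx pos her_all] by blast
  then have "(\<Sum>j\<in>Idx N n. r Mn j * ket Pl j) = 0" by simp
  then show ?thesis unfolding ket_def by (simp add: sum_delta_mult(2)[OF finite_Idx])
qed

lemma main: "r = outer (ket Mn) (ket Mn)"
proof -
  have PlMn: "r Pl Mn = 0" using MnPl her by (metis complex_cnj_zero)
  have tr: "(\<Sum>i\<in>Idx N n. r i i) = 1" using st unfolding is_state_def by blast
  have "(\<Sum>i\<in>Idx N n. r i i) = r Mn Mn + r Pl Pl" by (rule sum_MnPl) (simp add: Z2)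
  then have MnMn: "r Mn Mn = 1" using tr PlPl by simp
  show ?thesis
  proof (intro ext)
    fix i j
    show "r i j = outer (ket Mn) (ket Mn) i j"
      by (cases "i = Mn \<or> i = Pl"; cases "j = Mn \<or> j = Pl")
        (auto simp: outer_def ket_def MnMn PlPl MnPl PlMn Z2 Z2')
  qed
qed

end

theorem theorem3p25:
  fixes N :: nat and n :: "nat \<Rightarrow> nat"
    and Gam gam :: "sgn \<Rightarrow> bohr \<Rightarrow> real" and \<rho> :: op
  assumes "N \<ge> 2"
    and "\<forall>k. 1 \<le> k \<and> k < N \<longrightarrow> n (Suc k) \<le> n k"
    and "\<forall>k. 1 \<le> k \<and> k \<le> N \<longrightarrow> 1 \<le> n k"
    and "\<forall>e. \<forall>w\<in>Freqs N. Gam e w > 0"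
    and "is_state N n \<rho>"
    and "invariant N n Gam gam \<rho>"
    and "supported_on N n \<rho> (OmegaPerp N n)"
  shows "\<rho> = outer (ket Mn) (ket Mn)"
proof -
  interpret S N n Gam gam \<rho>
    using assms by (unfold_locales) auto
  show ?thesis by (rule main)
qed

end
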